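(* Let $C=(N,E)$ be a (deterministic) TDD respecting a vtree $T$ over $X$. For every node $t$ of $T$ and all distinct $t$-nodes $g,g'$, the functions $f_g$ and $f_{g'}$ have no common model. As a consequence, every model $\tau$ of $f_C$ has a unique certificate in $C$.
   Context: For a finite set $A$, $2^A$ is the set of assignments $A\to\{0,1\}$; a Boolean function over $X$ is a map $2^X\to\{0,1\}$ with models the assignments mapped to $1$. A vtree over $X$ is a rooted tree in which every internal node has exactly two children (ordered: $t_1$, $t_2$) and whose leaves are labeled bijectively by $X$; $X_t$ denotes the variables labeling leaves below node $t$. An nTDD $C=(N,E)$ respecting $T$: nodes $N=\biguplus_t N_t$ ($t$-nodes) over nodes $t$ of $T$; a $t$-node with $t$ a leaf labeled $x$ has a label in $\{x,\neg x,1,0\}$; $E(g)=\emptyset$ for leaf $t$, and $E(g)\subseteq N_{t_1}\times N_{t_2}$ for internal $t$ with children $t_1,t_2$; a distinguished $r$-node $\mathrm{out}$ ($r$ the root). Semantics: a leaf $t$-node computes the function over $\{x\}$ given by its label (literal or constant); for internal $t$, $\tau\in 2^{X_t}$ is a model of $f_g$ iff some $(g_1,g_2)\in E(g)$ has $\tau|_{X_{t_1}}\models f_{g_1}$ and $\tau|_{X_{t_2}}\models f_{g_2}$; $f_C=f_{\mathrm{out}}$. A TDD is an nTDD such that (i) for every leaf $t$ labeled $x$, $N_t$ has at most one node labeled $x$, at most one labeled $\neg x$, at most one labeled $1$, and if some node is labeled $1$ all other nodes of $N_t$ are labeled $0$; (ii) for every internal $t$ and distinct $g,g'\in N_t$,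 $E(g)\cap E(g')=\emptyset$. A certificate for $\tau\in 2^X$ in $C$ is a choice of one $t$-node $g_t$ per node $t$ of $T$ with $g_r=\mathrm{out}$, each leaf choice labeled $1$ or by a literal true under $\tau$, and $(g_{t_1},g_{t_2})\in E(g_t)$ for each internal $t$ with children $t_1,t_2$. *)

theory Defs
  imports Main
begin

text \<open>Since leaves are labelled bijectively, distinct nodes of a vtree are
  distinct subtrees, so we identify a node t of T with the subtree rooted at t.\<close>

datatype 'x vtree = Leaf 'x | Node "'x vtree" "'x vtree"

fun leaves :: "'x vtree \<Rightarrow> 'x list" where
  "leaves (Leaf x) = [x]"
| "leaves (Node t1 t2) = leaves t1 @ leaves t2"

definition vtree_wf :: "'x vtree \<Rightarrow> bool" where
  "vtree_wf T \<longleftrightarrow> distinct (leaves T)"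

definition vars :: "'x vtree \<Rightarrow> 'x set" where
  "vars T = set (leaves T)"

fun nodes :: "'x vtree \<Rightarrow> 'x vtree set" where
  "nodes (Leaf x) = {Leaf x}"
| "nodes (Node t1 t2) = insert (Node t1 t2) (nodes t1 \<union> nodes t2)"

datatype 'x lab = Pos 'x | Neg 'x | One | Zero

fun lab_sem :: "'x lab \<Rightarrow> ('x \<Rightarrow> bool) \<Rightarrow> bool" where
  "lab_sem (Pos x) \<tau> = \<tau> x"
| "lab_sem (Neg x) \<tau> = (\<not> \<tau> x)"
| "lab_sem One \<tau> = True"
| "lab_sem Zero \<tau> = False"

text \<open>A diagram is given by a node set N, a map lev assigning to each node g the
  vtree node t with g \<in> N_t, leaf labels lab, edge sets E, and an output node out.
  N_t is the set of t-nodes.\<close>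

definition tnodes :: "'g set \<Rightarrow> ('g \<Rightarrow> 'x vtree) \<Rightarrow> 'x vtree \<Rightarrow> 'g set" where
  "tnodes N lev t = {g \<in> N. lev g = t}"

definition is_nTDD ::
  "'x vtree \<Rightarrow> 'g set \<Rightarrow> ('g \<Rightarrow> 'x vtree) \<Rightarrow> ('g \<Rightarrow> 'x lab) \<Rightarrow> ('g \<Rightarrow> ('g \<times> 'g) set) \<Rightarrow> 'g \<Rightarrow> bool"
where
  "is_nTDD T N lev lab E out \<longleftrightarrow>
     vtree_wf T \<and>
     (\<forall>g\<in>N. lev g \<in> nodes T) \<and>
     (\<forall>g\<in>N. \<forall>x. lev g = Leaf x \<longrightarrow> lab g \<in> {Pos x, Neg x, One, Zero} \<and> E g = {}) \<and>
     (\<forall>g\<in>N. \<forall>t1 t2. lev g = Node t1 t2 \<longrightarrow> E g \<subseteq> tnodes N lev t1 \<times> tnodes N lev t2) \<and>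
     out \<in> N \<and> lev out = T"

definition is_TDD ::
  "'x vtree \<Rightarrow> 'g set \<Rightarrow> ('g \<Rightarrow> 'x vtree) \<Rightarrow> ('g \<Rightarrow> 'x lab) \<Rightarrow> ('g \<Rightarrow> ('g \<times> 'g) set) \<Rightarrow> 'g \<Rightarrow> bool"
where
  "is_TDD T N lev lab E out \<longleftrightarrow>
     is_nTDD T N lev lab E out \<and>
     (\<forall>x. Leaf x \<in> nodes T \<longrightarrow>
        (\<forall>g\<in>tnodes N lev (Leaf x). \<forall>g'\<in>tnodes N lev (Leaf x).
            lab g = Pos x \<longrightarrow> lab g' = Pos x \<longrightarrow> g = g') \<and>
        (\<forall>g\<in>tnodes N lev (Leaf x). \<forall>g'\<in>tnodes N lev (Leaf x).
            lab g = Neg x \<longrightarrow> lab g' = Neg x \<longrightarrow> g = g') \<and>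
        (\<forall>g\<in>tnodes N lev (Leaf x). \<forall>g'\<in>tnodes N lev (Leaf x).
            lab g = One \<longrightarrow> lab g' = One \<longrightarrow> g = g') \<and>
        (\<forall>g\<in>tnodes N lev (Leaf x). lab g = One \<longrightarrow>
            (\<forall>g'\<in>tnodes N lev (Leaf x). g' \<noteq> g \<longrightarrow> lab g' = Zero))) \<and>
     (\<forall>t1 t2. Node t1 t2 \<in> nodes T \<longrightarrow>
        (\<forall>g\<in>tnodes N lev (Node t1 t2). \<forall>g'\<in>tnodes N lev (Node t1 t2).
            g \<noteq> g' \<longrightarrow> E g \<inter> E g' = {}))"

text \<open>Semantics: sem lab E t g \<tau> says \<tau> (restricted to X_t) is a model of f_g,
  for a t-node g.  Assignments are total maps 'x \<Rightarrow> bool; only values on X_t matter.\<close>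

fun sem :: "('g \<Rightarrow> 'x lab) \<Rightarrow> ('g \<Rightarrow> ('g \<times> 'g) set) \<Rightarrow> 'x vtree \<Rightarrow> 'g \<Rightarrow> ('x \<Rightarrow> bool) \<Rightarrow> bool" where
  "sem lab E (Leaf x) g \<tau> = lab_sem (lab g) \<tau>"
| "sem lab E (Node t1 t2) g \<tau> =
     (\<exists>(g1, g2) \<in> E g. sem lab E t1 g1 \<tau> \<and> sem lab E t2 g2 \<tau>)"

definition is_certificate ::
  "'x vtree \<Rightarrow> 'g set \<Rightarrow> ('g \<Rightarrow> 'x vtree) \<Rightarrow> ('g \<Rightarrow> 'x lab) \<Rightarrow> ('g \<Rightarrow> ('g \<times> 'g) set) \<Rightarrow> 'g
    \<Rightarrow> ('x \<Rightarrow> bool) \<Rightarrow> ('x vtree \<Rightarrow> 'g) \<Rightarrow> bool"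
where
  "is_certificate T N lev lab E out \<tau> c \<longleftrightarrow>
     (\<forall>t\<in>nodes T. c t \<in> tnodes N lev t) \<and>
     c T = out \<and>
     (\<forall>x. Leaf x \<in> nodes T \<longrightarrow>
        lab (c (Leaf x)) = One \<or> (lab (c (Leaf x)) = Pos x \<and> \<tau> x)
        \<or> (lab (c (Leaf x)) = Neg x \<and> \<not> \<tau> x)) \<and>
     (\<forall>t1 t2. Node t1 t2 \<in> nodes T \<longrightarrow> (c t1, c t2) \<in> E (c (Node t1 t2)))"

end

theory Submission
  imports Defs
begin

lemma nodes_self: "t \<in> nodes t"
  by (cases t) auto

lemma nodes_trans: "s \<in> nodes t \<Longrightarrow> nodes s \<subseteq> nodes t"
  by (induction t) auto

lemma sub_nodes: "Node t1 t2 \<in> nodes T \<Longrightarrow> t1 \<in> nodes T \<and> t2 \<in> nodes T"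
  using nodes_trans[of "Node t1 t2" T] nodes_self[of t1] nodes_self[of t2] by auto

lemma nodes_leaves: "s \<in> nodes t \<Longrightarrow> set (leaves s) \<subseteq> set (leaves t)"
  by (induction t) auto

lemma nodes_size: "s \<in> nodes t \<Longrightarrow> size s \<le> size t"
  by (induction t) auto

lemma leaves_ne: "leaves t \<noteq> []"
  by (induction t) auto

lemma distinct_sub: "s \<in> nodes t \<Longrightarrow> distinct (leaves t) \<Longrightarrow> distinct (leaves s)"
  by (induction t) auto

lemma disj_nodes:
  assumes "distinct (leaves (Node t1 t2))"
  shows "nodes t1 \<inter> nodes t2 = {}"
proof (rule ccontr)
  assume "nodes t1 \<inter> nodes t2 \<noteq> {}"
  then obtain s where s: "s \<in> nodes t1" "s \<in> nodes t2" by blast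
  obtain v where "v \<in> set (leaves s)" using leaves_ne[of s]
    by (cases "leaves s") auto
  then have "v \<in> set (leaves t1)" "v \<in> set (leaves t2)"
    using nodes_leaves s by blast+
  then show False using assms by auto
qed

lemma tdd_leaf:
  assumes "is_TDD T N lev lab E out" "Leaf x \<in> nodes T"
  shows "(\<forall>g\<in>tnodes N lev (Leaf x). \<forall>g'\<in>tnodes N lev (Leaf x).
            lab g = Pos x \<longrightarrow> lab g' = Pos x \<longrightarrow> g = g') \<and>
     (\<forall>g\<in>tnodes N lev (Leaf x). \<forall>g'\<in>tnodes N lev (Leaf x).
            lab g = Neg x \<longrightarrow> lab g' = Neg x \<longrightarrow> g = g') \<and>
     (\<forall>g\<in>tnodes N lev (Leaf x). \<forall>g'\<in>tnodes N lev (Leaf x).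
            lab g = One \<longrightarrow> lab g' = One \<longrightarrow> g = g') \<and>
     (\<forall>g\<in>tnodes N lev (Leaf x). lab g = One \<longrightarrow>
            (\<forall>g'\<in>tnodes N lev (Leaf x). g' \<noteq> g \<longrightarrow> lab g' = Zero))"
  using assms(1)[unfolded is_TDD_def, THEN conjunct2, THEN conjunct1, rule_format, OF assms(2)] .

lemma tdd_node:
  assumes "is_TDD T N lev lab E out" "Node t1 t2 \<in> nodes T"
   "g \<in> tnodes N lev (Node t1 t2)" "g' \<in> tnodes N lev (Node t1 t2)" "g \<noteq> g'"
  shows "E g \<inter> E g' = {}"
  using assms(1)[unfolded is_TDD_def, THEN conjunct2, THEN conjunct2, rule_format, OF assms(2-5)] .

lemma tdd_lab:
  assumes "is_TDD T N lev lab E out" "g \<in> tnodes N lev (Leaf x)"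
  shows "lab g \<in> {Pos x, Neg x, One, Zero}"
proof -
  have "is_nTDD T N lev lab E out" using assms(1) unfolding is_TDD_def by (rule conjunct1)
  then have "\<forall>g\<in>N. \<forall>x. lev g = Leaf x \<longrightarrow> lab g \<in> {Pos x, Neg x, One, Zero} \<and> E g = {}"
    unfolding is_nTDD_def by (elim conjE)
  then show ?thesis using assms(2) unfolding tnodes_def by blast
qed

lemma tdd_E:
  assumes "is_TDD T N lev lab E out" "g \<in> tnodes N lev (Node t1 t2)"
  shows "E g \<subseteq> tnodes N lev t1 \<times> tnodes N lev t2"
proof -
  have "is_nTDD T N lev lab E out" using assms(1) unfolding is_TDD_def by (rule conjunct1)
  then have "\<forall>g\<in>N. \<forall>t1 t2. lev g = Node t1 t2 \<longrightarrow> E g \<subseteq> tnodes N lev t1 \<times> tnodes N lev t2"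
    unfolding is_nTDD_def by (elim conjE)
  then show ?thesis using assms(2) unfolding tnodes_def by blast
qed
lemma tdd_basic:
  assumes "is_TDD T N lev lab E out"
  shows "distinct (leaves T) \<and> out \<in> tnodes N lev T"
proof -
  have "is_nTDD T N lev lab E out" using assms(1) unfolding is_TDD_def by (rule conjunct1)
  then show ?thesis unfolding is_nTDD_def vtree_wf_def tnodes_def by blast
qed

lemma leaf_unique:
  assumes tdd: "is_TDD T N lev lab E out" and L: "Leaf x \<in> nodes T"
    and gg: "g \<in> tnodes N lev (Leaf x)" "g' \<in> tnodes N lev (Leaf x)"
    and s1: "lab_sem (lab g) \<tau>" "lab_sem (lab g') \<tau>"
  shows "g = g'"
proof (rule ccontr)
  assume ne: "g \<noteq> g'"
  note c = tdd_leaf[OF tdd L]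
  have c1: "lab g = Pos x \<Longrightarrow> lab g' = Pos x \<Longrightarrow> g = g'" using c gg by blast
  have c2: "lab g = Neg x \<Longrightarrow> lab g' = Neg x \<Longrightarrow> g = g'" using c gg by blast
  have ne': "g' \<noteq> g" using ne by simp
  have c3: "\<forall>g\<in>tnodes N lev (Leaf x). lab g = One \<longrightarrow>
            (\<forall>g'\<in>tnodes N lev (Leaf x). g' \<noteq> g \<longrightarrow> lab g' = Zero)" using c by (elim conjE)
  have c4: "lab g = One \<Longrightarrow> lab g' = Zero" using c3 gg ne' by blast
  have c5: "lab g' = One \<Longrightarrow> lab g = Zero" using c3 gg ne by blast
  have la: "lab g \<in> {Pos x, Neg x, One, Zero}" "lab g' \<in> {Pos x, Neg x, One, Zero}"
    using tdd_lab[OF tdd gg(1)] tdd_lab[OF tdd gg(2)] .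
  have z: "lab g \<noteq> Zero" "lab g' \<noteq> Zero" using s1 by auto
  have o: "lab g \<noteq> One" "lab g' \<noteq> One" using c4 c5 z by auto
  from la z o have "lab g \<in> {Pos x, Neg x}" "lab g' \<in> {Pos x, Neg x}" by auto
  then show False using c1 c2 ne s1 by auto
qed

lemma part1:
  assumes tdd: "is_TDD T N lev lab E out"
  shows "t \<in> nodes T \<Longrightarrow> g \<in> tnodes N lev t \<Longrightarrow> g' \<in> tnodes N lev t \<Longrightarrow>
     sem lab E t g \<tau> \<Longrightarrow> sem lab E t g' \<tau> \<Longrightarrow> g = g'"
proof (induction t arbitrary: g g')
  case (Leaf x)
  then show ?case using leaf_unique[OF tdd Leaf.prems(1-3)] by simp
next
  case (Node t1 t2)
  have sub: "t1 \<in> nodes T" "t2 \<in> nodes T"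
    using sub_nodes[OF Node.prems(1)] by auto
  obtain g1 g2 where e: "(g1, g2) \<in> E g" "sem lab E t1 g1 \<tau>" "sem lab E t2 g2 \<tau>"
    using Node.prems(4) by auto
  obtain h1 h2 where e': "(h1, h2) \<in> E g'" "sem lab E t1 h1 \<tau>" "sem lab E t2 h2 \<tau>"
    using Node.prems(5) by auto
  have inc: "E g \<subseteq> tnodes N lev t1 \<times> tnodes N lev t2"
            "E g' \<subseteq> tnodes N lev t1 \<times> tnodes N lev t2"
    using tdd_E[OF tdd Node.prems(2)] tdd_E[OF tdd Node.prems(3)] by blast+
  have "g1 = h1" using Node.IH(1)[OF sub(1) _ _ e(2) e'(2)] inc e(1) e'(1) by blast
  moreover have "g2 = h2" using Node.IH(2)[OF sub(2) _ _ e(3) e'(3)] inc e(1) e'(1) by blast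
  ultimately have "(g1, g2) \<in> E g \<inter> E g'" using e e' by auto
  moreover have "g \<noteq> g' \<longrightarrow> E g \<inter> E g' = {}"
    using tdd_node[OF tdd Node.prems(1-3)] by blast
  ultimately show ?case by blast
qed

lemma cert_sem:
  assumes "is_certificate T N lev lab E out \<tau> c"
  shows "t \<in> nodes T \<Longrightarrow> sem lab E t (c t) \<tau>"
proof (induction t)
  case (Leaf x)
  then show ?case using assms unfolding is_certificate_def by auto
next
  case (Node t1 t2)
  have sub: "t1 \<in> nodes T" "t2 \<in> nodes T"
    using sub_nodes[OF Node.prems(1)] by auto
  have "(c t1, c t2) \<in> E (c (Node t1 t2))"
    using assms Node.prems unfolding is_certificate_def by blast
  then show ?case using Node.IH sub by auto
qed

lemma exist:
  assumes tdd: "is_TDD T N lev lab E out"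
  shows "t \<in> nodes T \<Longrightarrow> g \<in> tnodes N lev t \<Longrightarrow> sem lab E t g \<tau> \<Longrightarrow>
    \<exists>c. c t = g \<and> (\<forall>s\<in>nodes t. c s \<in> tnodes N lev s) \<and>
     (\<forall>x. Leaf x \<in> nodes t \<longrightarrow>
        lab (c (Leaf x)) = One \<or> (lab (c (Leaf x)) = Pos x \<and> \<tau> x)
        \<or> (lab (c (Leaf x)) = Neg x \<and> \<not> \<tau> x)) \<and>
     (\<forall>t1 t2. Node t1 t2 \<in> nodes t \<longrightarrow> (c t1, c t2) \<in> E (c (Node t1 t2)))"
proof (induction t arbitrary: g)
  case (Leaf x)
  have "lab g \<in> {Pos x, Neg x, One, Zero}"
    using Leaf.prems tdd_lab[OF tdd] by blast
  then have "lab g = One \<or> (lab g = Pos x \<and> \<tau> x) \<or> (lab g = Neg x \<and> \<not> \<tau> x)"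
    using Leaf.prems(3) by auto
  then show ?case using Leaf.prems(2) by (intro exI[of _ "\<lambda>_. g"]) auto
next
  case (Node t1 t2)
  have sub: "t1 \<in> nodes T" "t2 \<in> nodes T"
    using sub_nodes[OF Node.prems(1)] by auto
  obtain g1 g2 where e: "(g1, g2) \<in> E g" "sem lab E t1 g1 \<tau>" "sem lab E t2 g2 \<tau>"
    using Node.prems(3) by auto
  have inc: "E g \<subseteq> tnodes N lev t1 \<times> tnodes N lev t2"
    using tdd_E[OF tdd Node.prems(2)] .
  obtain c1 where c1: "c1 t1 = g1" "\<forall>s\<in>nodes t1. c1 s \<in> tnodes N lev s"
     "\<forall>x. Leaf x \<in> nodes t1 \<longrightarrow>
        lab (c1 (Leaf x)) = One \<or> (lab (c1 (Leaf x)) = Pos x \<and> \<tau> x)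
        \<or> (lab (c1 (Leaf x)) = Neg x \<and> \<not> \<tau> x)"
     "\<forall>u1 u2. Node u1 u2 \<in> nodes t1 \<longrightarrow> (c1 u1, c1 u2) \<in> E (c1 (Node u1 u2))"
    using Node.IH(1)[OF sub(1) _ e(2)] inc e(1) by blast
  obtain c2 where c2: "c2 t2 = g2" "\<forall>s\<in>nodes t2. c2 s \<in> tnodes N lev s"
     "\<forall>x. Leaf x \<in> nodes t2 \<longrightarrow>
        lab (c2 (Leaf x)) = One \<or> (lab (c2 (Leaf x)) = Pos x \<and> \<tau> x)
        \<or> (lab (c2 (Leaf x)) = Neg x \<and> \<not> \<tau> x)"
     "\<forall>u1 u2. Node u1 u2 \<in> nodes t2 \<longrightarrow> (c2 u1, c2 u2) \<in> E (c2 (Node u1 u2))"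
    using Node.IH(2)[OF sub(2) _ e(3)] inc e(1) by blast
  have wf: "distinct (leaves T)" using tdd_basic[OF tdd] by blast
  have dis: "nodes t1 \<inter> nodes t2 = {}"
    using disj_nodes distinct_sub[OF Node.prems(1) wf] by blast
  have n1: "Node t1 t2 \<notin> nodes t1" using nodes_size[of "Node t1 t2" t1] by auto
  have n2: "Node t1 t2 \<notin> nodes t2" using nodes_size[of "Node t1 t2" t2] by auto
  define c where "c s = (if s = Node t1 t2 then g else if s \<in> nodes t1 then c1 s else c2 s)" for s
  have ct1: "\<forall>s\<in>nodes t1. c s = c1 s" using n1 unfolding c_def by auto
  have ct2: "\<forall>s\<in>nodes t2. c s = c2 s" using n2 dis unfolding c_def by auto
  have self1: "t1 \<in> nodes t1" "t2 \<in> nodes t2" by (rule nodes_self)+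
  have A: "\<forall>s\<in>nodes (Node t1 t2). c s \<in> tnodes N lev s"
    using ct1 ct2 c1(2) c2(2) Node.prems(2) unfolding c_def by auto
  have B: "\<forall>x. Leaf x \<in> nodes (Node t1 t2) \<longrightarrow>
        lab (c (Leaf x)) = One \<or> (lab (c (Leaf x)) = Pos x \<and> \<tau> x)
        \<or> (lab (c (Leaf x)) = Neg x \<and> \<not> \<tau> x)"
    using ct1 ct2 c1(3) c2(3) by auto
  have C: "\<forall>u1 u2. Node u1 u2 \<in> nodes (Node t1 t2) \<longrightarrow> (c u1, c u2) \<in> E (c (Node u1 u2))"
  proof (intro allI impI)
    fix u1 u2 assume u: "Node u1 u2 \<in> nodes (Node t1 t2)"
    show "(c u1, c u2) \<in> E (c (Node u1 u2))"
    proof (cases "Node u1 u2 = Node t1 t2")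
      case True
      then show ?thesis using ct1 ct2 self1 c1(1) c2(1) e(1) unfolding c_def by auto
    next
      case False
      then have "Node u1 u2 \<in> nodes t1 \<or> Node u1 u2 \<in> nodes t2" using u by auto
      then show ?thesis
      proof
        assume h: "Node u1 u2 \<in> nodes t1"
        then have "u1 \<in> nodes t1" "u2 \<in> nodes t1" using sub_nodes by blast+
        then show ?thesis using h ct1 c1(4) by auto
      next
        assume h: "Node u1 u2 \<in> nodes t2"
        then have "u1 \<in> nodes t2" "u2 \<in> nodes t2" using sub_nodes by blast+
        then show ?thesis using h ct2 c2(4) by auto
      qed
    qed
  qed
  have "c (Node t1 t2) = g" unfolding c_def by simp
  then show ?case using A B C by blast
qed

theorem theorem2:
  fixes T :: "'x vtree" and N :: "'g set" and lev :: "'g \<Rightarrow> 'x vtree"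
    and lab :: "'g \<Rightarrow> 'x lab" and E :: "'g \<Rightarrow> ('g \<times> 'g) set" and out :: 'g
  assumes "is_TDD T N lev lab E out"
  shows "(\<forall>t\<in>nodes T. \<forall>g\<in>tnodes N lev t. \<forall>g'\<in>tnodes N lev t.
            g \<noteq> g' \<longrightarrow> \<not> (\<exists>\<tau>. sem lab E t g \<tau> \<and> sem lab E t g' \<tau>))
     \<and> (\<forall>\<tau>. sem lab E T out \<tau> \<longrightarrow>
          (\<exists>c. is_certificate T N lev lab E out \<tau> c \<and>
             (\<forall>c'. is_certificate T N lev lab E out \<tau> c' \<longrightarrow> (\<forall>t\<in>nodes T. c' t = c t))))"
proof (intro conjI allI impI)
  show "\<forall>t\<in>nodes T. \<forall>g\<in>tnodes N lev t. \<forall>g'\<in>tnodes N lev t.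
            g \<noteq> g' \<longrightarrow> \<not> (\<exists>\<tau>. sem lab E t g \<tau> \<and> sem lab E t g' \<tau>)"
    using part1[OF assms] by blast
next
  fix \<tau> assume s: "sem lab E T out \<tau>"
  have o: "out \<in> tnodes N lev T" "T \<in> nodes T"
    using tdd_basic[OF assms] nodes_self by auto
  obtain c where c: "c T = out" "\<forall>s\<in>nodes T. c s \<in> tnodes N lev s"
     "\<forall>x. Leaf x \<in> nodes T \<longrightarrow>
        lab (c (Leaf x)) = One \<or> (lab (c (Leaf x)) = Pos x \<and> \<tau> x)
        \<or> (lab (c (Leaf x)) = Neg x \<and> \<not> \<tau> x)"
     "\<forall>u1 u2. Node u1 u2 \<in> nodes T \<longrightarrow> (c u1, c u2) \<in> E (c (Node u1 u2))"
    using exist[OF assms o(2) o(1) s] by blast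
  have cc: "is_certificate T N lev lab E out \<tau> c"
    unfolding is_certificate_def using c by blast
  show "\<exists>c. is_certificate T N lev lab E out \<tau> c \<and>
             (\<forall>c'. is_certificate T N lev lab E out \<tau> c' \<longrightarrow> (\<forall>t\<in>nodes T. c' t = c t))"
  proof (intro exI conjI allI impI ballI)
    show "is_certificate T N lev lab E out \<tau> c" by (rule cc)
  next
    fix c' t assume c': "is_certificate T N lev lab E out \<tau> c'" and t: "t \<in> nodes T"
    have "c' t \<in> tnodes N lev t" using c' t unfolding is_certificate_def by blast
    moreover have "c t \<in> tnodes N lev t" using c(2) t by blast
    ultimately show "c' t = c t"
      using part1[OF assms t] cert_sem[OF c' t] cert_sem[OF cc t] by blast
  qed
qed

end
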